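(* Let $\ell$ be a positive integer and $n$ an integer such that $n/\ell\in\mathbb Z$ and $n\ell+\ell^2>0$. For $u,v\in\mathbb C$, $\tau\in\mathbb H$ and $n',e'\in\mathbb C$ define $$\chi_{\mathsf T^{n,\ell}_{n',e'}}(u,v;\tau)=i(-1)^{\lfloor e'\rfloor}\frac{\theta_1(u;\tau)}{\eta(\tau)^3}\sum_{m\in\mathbb Z}(-1)^{m\ell}e^{2\pi i v(e'+m\ell)}e^{2\pi i u(n'+mn)}e^{2\pi i\tau\left(n'e'+\frac{e'^2}{2}+\frac{m^2}{2}(2n\ell+\ell^2)+m(ne'+n'\ell+\ell e')\right)},$$ where $\lfloor e'\rfloor$ is the largest integer less than or equal to the real part of $e'$. Then, writing $y=e^{2\pi i v}$, $z=e^{2\pi i u}$, $$\chi_{\mathsf T^{n,\ell}_{n',e'}}(u+1,v;\tau)=e^{2\pi i(n'-1/2)}\chi_{\mathsf T^{n,\ell}_{n',e'}}(u,v;\tau),\qquad \chi_{\mathsf T^{n,\ell}_{n',e'}}(u+\tau,v;\tau)=y^{-1}\chi_{\mathsf T^{n,\ell}_{n'-1,e'+1}}(u,v;\tau),$$ $$\chi_{\mathsf T^{n,\ell}_{n',e'}}(u,v+1;\tau)=e^{2\pi i e'}\chi_{\mathsf T^{n,\ell}_{n',e'}}(u,v;\tau),\qquad \chi_{\mathsf T^{n,\ell}_{n',e'}}(u,v+\tau;\tau)=z^{-1}\chi_{\mathsf T^{n,\ell}_{n'+1,e'}}(u,v;\tau),$$ and more generally, for every $\alpha\in\mathbb R$,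 $$\chi_{\mathsf T^{n,\ell}_{n',e'}}(u,v+\alpha\tau;\tau)=e^{-2\pi i\alpha u}\,\chi_{\mathsf T^{n,\ell}_{n'+\alpha,e'}}(u,v;\tau).$$
   Context: $\theta_1(u;\tau)=-i\sum_{n\in\mathbb Z}(-1)^n e^{\pi i(n+\frac12)^2\tau+2\pi i u(n+\frac12)}$ and $\eta(\tau)=e^{\pi i\tau/12}\prod_{j\ge1}(1-e^{2\pi i j\tau})$. The function $\chi_{\mathsf T^{n,\ell}_{n',e'}}$ is the character of the typical module $\mathsf T^{n,\ell}_{n',e'}$ of a W-superalgebra extending $\widehat{\mathfrak{gl}}(1|1)$; here it is taken as defined by the displayed formula (the series converges since $2n\ell+\ell^2>0$). *)

theory Defs
  imports "HOL-Analysis.Analysis"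
begin

definition theta1 :: "complex \<Rightarrow> complex \<Rightarrow> complex" where
  "theta1 u \<tau> = - \<i> * (\<Sum>\<^sub>\<infinity> k\<in>(UNIV::int set).
      (-1) powi k * exp (pi * \<i> * (of_int k + 1/2)^2 * \<tau> + 2 * pi * \<i> * u * (of_int k + 1/2)))"

definition eta :: "complex \<Rightarrow> complex" where
  "eta \<tau> = exp (pi * \<i> * \<tau> / 12) * (\<Prod>j. (1 - exp (2 * pi * \<i> * of_nat (Suc j) * \<tau>)))"

definition chiT :: "int \<Rightarrow> int \<Rightarrow> complex \<Rightarrow> complex \<Rightarrow> complex \<Rightarrow> complex \<Rightarrow> complex \<Rightarrow> complex" where
  "chiT n l n' e' u v \<tau> =
     \<i> * (-1) powi \<lfloor>Re e'\<rfloor> * theta1 u \<tau> / (eta \<tau>)^3 *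
     (\<Sum>\<^sub>\<infinity> m\<in>(UNIV::int set).
        (-1) powi (m * l) * exp (2 * pi * \<i> * v * (e' + of_int m * of_int l))
        * exp (2 * pi * \<i> * u * (n' + of_int m * of_int n))
        * exp (2 * pi * \<i> * \<tau> * (n' * e' + e'^2 / 2
              + (of_int m)^2 / 2 * (2 * of_int n * of_int l + (of_int l)^2)
              + of_int m * (of_int n * e' + n' * of_int l + of_int l * e'))))"

end

theory Submission
  imports Defs
begin

lemma exp_int2pi: "exp (2 * pi * \<i> * of_int k) = 1"
proof -
  have e: "2 * pi * \<i> * of_int k = \<i> * (of_int k * (of_real pi * 2))" by (simp add: mult_ac)
  show ?thesis by (simp only: e exp_2pi_1_int)
qed

lemma exp_int2pi': "exp (2 * complex_of_real pi * \<i> * of_int k) = 1"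
  using exp_int2pi[of k] by simp

definition ST :: "int \<Rightarrow> int \<Rightarrow> complex \<Rightarrow> complex \<Rightarrow> complex \<Rightarrow> complex \<Rightarrow> complex \<Rightarrow> int \<Rightarrow> complex" where
  "ST n l n' e' u v \<tau> m = 
        (-1) powi (m * l) * exp ((2 * pi * \<i>) * (v * (e' + of_int m * of_int l)))
        * exp ((2 * pi * \<i>) * (u * (n' + of_int m * of_int n)))
        * exp ((2 * pi * \<i>) * (\<tau> * (n' * e' + e'^2 / 2
              + (of_int m)^2 / 2 * (2 * of_int n * of_int l + (of_int l)^2)
              + of_int m * (of_int n * e' + n' * of_int l + of_int l * e'))))"

lemma chiT_alt: "chiT n l n' e' u v \<tau> = \<i> * (-1) powi \<lfloor>Re e'\<rfloor> * theta1 u \<tau> / (eta \<tau>)^3 * infsum (ST n l n' e' u v \<tau>) UNIV"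
  by (simp only: chiT_def ST_def[abs_def] mult.assoc)

lemma genP:
  assumes "X1 + Y1 + Z1 = K + (X2 + Y2 + Z2) + of_int j"
  shows "s * exp ((2 * pi * \<i>) * X1) * exp ((2 * pi * \<i>) * Y1) * exp ((2 * pi * \<i>) * Z1)
       = exp ((2 * pi * \<i>) * K) * (s * exp ((2 * pi * \<i>) * X2) * exp ((2 * pi * \<i>) * Y2) * exp ((2 * pi * \<i>) * Z2))"
proof -
  have "exp ((2 * pi * \<i>) * X1) * exp ((2 * pi * \<i>) * Y1) * exp ((2 * pi * \<i>) * Z1) = exp ((2 * pi * \<i>) * (X1 + Y1 + Z1))"
    by (simp only: distrib_left exp_add)
  also have "\<dots> = exp ((2 * pi * \<i>) * K) * (exp ((2 * pi * \<i>) * X2) * exp ((2 * pi * \<i>) * Y2) * exp ((2 * pi * \<i>) * Z2)) * exp ((2 * pi * \<i>) * of_int j)"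
    by (simp only: assms distrib_left exp_add)
  also have "exp ((2 * pi * \<i>) * of_int j) = 1" by (rule exp_int2pi)
  finally show ?thesis by (simp only: mult_1_right mult.assoc mult.left_commute)
qed

lemma ST_u1: "ST n l n' e' (u+1) v \<tau> m = exp (2 * pi * \<i> * n') * ST n l n' e' u v \<tau> m"
  unfolding ST_def by (rule genP[where j="m*n"]) (simp add: algebra_simps)

lemma ST_ut: "ST n l n' e' (u+\<tau>) v \<tau> m = exp ((2 * pi * \<i>) * (\<tau>/2 + u - v)) * ST n l (n' - 1) (e' + 1) u v \<tau> m"
  unfolding ST_def by (rule genP[where j=0]) (simp add: algebra_simps power2_eq_square)

lemma ST_v1: "ST n l n' e' u (v+1) \<tau> m = exp (2 * pi * \<i> * e') * ST n l n' e' u v \<tau> m"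
  unfolding ST_def by (rule genP[where j="m*l"]) (simp add: algebra_simps)

lemma ST_v0: "ST n l n' e' u (v + a * \<tau>) \<tau> m = exp ((2 * pi * \<i>) * (- (a * u))) * ST n l (n' + a) e' u v \<tau> m"
  unfolding ST_def by (rule genP[where j=0]) (simp add: algebra_simps)

lemma ST_v: "ST n l n' e' u (v + a * \<tau>) \<tau> m = exp (- 2 * pi * \<i> * a * u) * ST n l (n' + a) e' u v \<tau> m"
proof -
  have e: "- 2 * pi * \<i> * a * u = (2 * pi * \<i>) * (- (a * u))" by (simp add: algebra_simps)
  show ?thesis unfolding e by (rule ST_v0)
qed

lemma genA:
  assumes "x = y + 2 * pi * \<i> * of_int j + of_real pi * \<i>"
  shows "s * exp x = (-1) * (s * exp y)"
proof -
  have "exp x = exp y * exp (2 * pi * \<i> * of_int j) * exp (of_real pi * \<i>)"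
    by (simp only: assms exp_add)
  also have "\<dots> = - exp y" by (simp only: exp_int2pi exp_pi_i mult_1_right mult_minus1_right)
  finally show ?thesis by simp
qed

lemma genB:
  fixes x c y s s' :: complex
  assumes "x = c + y" and "s' = - s"
  shows "s * exp x = (- exp c) * (s' * exp y)"
  using assms by (simp add: exp_add)

lemma th: "theta1 w \<tau> = - \<i> * infsum (\<lambda>k::int. (-1) powi k * exp (pi * \<i> * (of_int k + 1/2)^2 * \<tau> + 2 * pi * \<i> * w * (of_int k + 1/2))) UNIV"
  by (simp only: theta1_def)

lemma theta_u1: "theta1 (u+1) \<tau> = - theta1 u \<tau>"
proof -
  have t: "(-1) powi k * exp (pi * \<i> * (of_int k + 1/2)^2 * \<tau> + 2 * pi * \<i> * (u+1) * (of_int k + 1/2))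
     = (-1) * ((-1) powi k * exp (pi * \<i> * (of_int k + 1/2)^2 * \<tau> + 2 * pi * \<i> * u * (of_int k + 1/2)))" for k :: int
    by (rule genA[where j=k]) (simp add: algebra_simps)
  define g where "g = (\<lambda>k::int. (-1) powi k * exp (pi * \<i> * (of_int k + 1/2)^2 * \<tau> + 2 * pi * \<i> * u * (of_int k + 1/2)))"
  have "theta1 (u+1) \<tau> = - \<i> * infsum (\<lambda>k. (-1) * g k) UNIV"
    by (simp only: th t g_def)
  also have "\<dots> = - \<i> * ((-1) * infsum g UNIV)"
    by (simp only: infsum_cmult_right')
  also have "\<dots> = - (- \<i> * infsum g UNIV)"
    by (simp only: mult_minus1 mult_minus_right)
  also have "\<dots> = - theta1 u \<tau>"
    by (simp only: th g_def)
  finally show ?thesis .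
qed

lemma theta_ut: "theta1 (u+\<tau>) \<tau> = - exp (- pi * \<i> * \<tau> - 2 * pi * \<i> * u) * theta1 u \<tau>"
proof -
  define f where "f = (\<lambda>k::int. (-1) powi k * exp (pi * \<i> * (of_int k + 1/2)^2 * \<tau> + 2 * pi * \<i> * u * (of_int k + 1/2)))"
  have t: "(-1) powi k * exp (pi * \<i> * (of_int k + 1/2)^2 * \<tau> + 2 * pi * \<i> * (u+\<tau>) * (of_int k + 1/2))
     = (- exp (- pi * \<i> * \<tau> - 2 * pi * \<i> * u)) * f (k+1)" for k :: int
  proof -
    have e: "pi * \<i> * (of_int k + 1/2)^2 * \<tau> + 2 * pi * \<i> * (u+\<tau>) * (of_int k + 1/2)
       = (- pi * \<i> * \<tau> - 2 * pi * \<i> * u) + (pi * \<i> * (of_int (k+1) + 1/2)^2 * \<tau> + 2 * pi * \<i> * u * (of_int (k+1) + 1/2))"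
      by (simp add: algebra_simps power2_eq_square)
    have s: "(-1::complex) powi (k+1) = - ((-1) powi k)"
      by (simp add: power_int_add)
    show ?thesis unfolding f_def by (rule genB[OF e s])
  qed
  have b: "bij_betw (\<lambda>k::int. k+1) UNIV UNIV"
    by (rule bij_betwI[where g="\<lambda>k. k - 1"]) auto
  have "theta1 (u+\<tau>) \<tau> = - \<i> * infsum (\<lambda>k. (- exp (- pi * \<i> * \<tau> - 2 * pi * \<i> * u)) * f (k+1)) UNIV"
    by (simp only: th t)
  also have "\<dots> = - \<i> * ((- exp (- pi * \<i> * \<tau> - 2 * pi * \<i> * u)) * infsum (\<lambda>k. f (k+1)) UNIV)"
    by (simp only: infsum_cmult_right')
  also have "\<dots> = - \<i> * ((- exp (- pi * \<i> * \<tau> - 2 * pi * \<i> * u)) * infsum f UNIV)"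
    by (simp only: infsum_reindex_bij_betw[OF b])
  also have "\<dots> = (- exp (- pi * \<i> * \<tau> - 2 * pi * \<i> * u)) * (- \<i> * infsum f UNIV)"
    by (rule mult.left_commute)
  also have "\<dots> = (- exp (- pi * \<i> * \<tau> - 2 * pi * \<i> * u)) * theta1 u \<tau>"
    by (simp only: th f_def)
  finally show ?thesis .
qed

lemma S_u1: "infsum (ST n l n' e' (u+1) v \<tau>) UNIV = exp (2 * pi * \<i> * n') * infsum (ST n l n' e' u v \<tau>) UNIV"
proof -
  have "ST n l n' e' (u+1) v \<tau> = (\<lambda>m. exp (2 * pi * \<i> * n') * ST n l n' e' u v \<tau> m)" by (rule ext) (rule ST_u1)
  then show ?thesis by (simp only: infsum_cmult_right')
qed

lemma S_ut: "infsum (ST n l n' e' (u+\<tau>) v \<tau>) UNIV = exp ((2 * pi * \<i>) * (\<tau>/2 + u - v)) * infsum (ST n l (n' - 1) (e' + 1) u v \<tau>) UNIV"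
proof -
  have "ST n l n' e' (u+\<tau>) v \<tau> = (\<lambda>m. exp ((2 * pi * \<i>) * (\<tau>/2 + u - v)) * ST n l (n' - 1) (e' + 1) u v \<tau> m)" by (rule ext) (rule ST_ut)
  then show ?thesis by (simp only: infsum_cmult_right')
qed

lemma S_v1: "infsum (ST n l n' e' u (v+1) \<tau>) UNIV = exp (2 * pi * \<i> * e') * infsum (ST n l n' e' u v \<tau>) UNIV"
proof -
  have "ST n l n' e' u (v+1) \<tau> = (\<lambda>m. exp (2 * pi * \<i> * e') * ST n l n' e' u v \<tau> m)" by (rule ext) (rule ST_v1)
  then show ?thesis by (simp only: infsum_cmult_right')
qed

lemma S_v: "infsum (ST n l n' e' u (v + a * \<tau>) \<tau>) UNIV = exp (- 2 * pi * \<i> * a * u) * infsum (ST n l (n' + a) e' u v \<tau>) UNIV"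
proof -
  have "ST n l n' e' u (v + a * \<tau>) \<tau> = (\<lambda>m. exp (- 2 * pi * \<i> * a * u) * ST n l (n' + a) e' u v \<tau> m)" by (rule ext) (rule ST_v)
  then show ?thesis by (simp only: infsum_cmult_right')
qed


lemma chi_v: "chiT n l n' e' u (v + a * \<tau>) \<tau> = exp (- 2 * pi * \<i> * a * u) * chiT n l (n' + a) e' u v \<tau>"
  unfolding chiT_alt S_v by (simp add: mult_ac)

lemma E1: "exp (2 * pi * \<i> * (n' - 1/2)) = - exp (2 * pi * \<i> * n')"
proof -
  have e: "2 * pi * \<i> * (n' - 1/2) = 2 * pi * \<i> * n' + of_real pi * \<i> + 2 * pi * \<i> * of_int (-1)"
    by (simp add: algebra_simps)
  show ?thesis unfolding e exp_add exp_int2pi exp_pi_i by simp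
qed

lemma chi_u1: "chiT n l n' e' (u + 1) v \<tau> = exp (2 * pi * \<i> * (n' - 1/2)) * chiT n l n' e' u v \<tau>"
  unfolding chiT_alt S_u1 theta_u1 E1 by (simp add: mult_ac)

lemma chi_v1: "chiT n l n' e' u (v + 1) \<tau> = exp (2 * pi * \<i> * e') * chiT n l n' e' u v \<tau>"
  unfolding chiT_alt S_v1 by (simp add: mult_ac)

lemma chi_vt: "chiT n l n' e' u (v + \<tau>) \<tau> = inverse (exp (2 * pi * \<i> * u)) * chiT n l (n' + 1) e' u v \<tau>"
proof -
  have "chiT n l n' e' u (v + 1 * \<tau>) \<tau> = exp (- 2 * pi * \<i> * 1 * u) * chiT n l (n' + 1) e' u v \<tau>"
    by (rule chi_v)
  moreover have "exp (- 2 * pi * \<i> * 1 * u) = inverse (exp (2 * pi * \<i> * u))"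
    by (subst exp_minus[symmetric]) simp
  ultimately show ?thesis by simp
qed

lemma Fl: "(-1::complex) powi \<lfloor>Re (e' + 1)\<rfloor> = - ((-1) powi \<lfloor>Re e'\<rfloor>)"
proof -
  have "\<lfloor>Re (e' + 1)\<rfloor> = \<lfloor>Re e'\<rfloor> + 1" by simp
  then show ?thesis by (simp add: power_int_add)
qed

lemma K: "exp (- pi * \<i> * \<tau> - 2 * pi * \<i> * u) * exp ((2 * pi * \<i>) * (\<tau>/2 + u - v)) = inverse (exp (2 * pi * \<i> * v))"
proof -
  have e: "(- pi * \<i> * \<tau> - 2 * pi * \<i> * u) + (2 * pi * \<i>) * (\<tau>/2 + u - v) = - (2 * pi * \<i> * v)"
    by (simp add: algebra_simps)
  show ?thesis by (simp only: exp_add[symmetric] e exp_minus)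
qed

lemma alg: "(i::complex) * s * (- E1 * t) / h * (E2 * S) = (E1 * E2) * (i * (- s) * t / h * S)"
  by (simp add: algebra_simps)

lemma chi_ut: "chiT n l n' e' (u + \<tau>) v \<tau> = inverse (exp (2 * pi * \<i> * v)) * chiT n l (n' - 1) (e' + 1) u v \<tau>"
  unfolding chiT_alt S_ut theta_ut Fl by (rule trans[OF alg], subst K, rule refl)

theorem mainTheorem4:
  fixes l n :: int and n' e' u v \<tau> :: complex
  assumes "l > 0" and "l dvd n" and "n * l + l^2 > 0" and "Im \<tau> > 0"
  defines "y \<equiv> exp (2 * pi * \<i> * v)" and "z \<equiv> exp (2 * pi * \<i> * u)"
  shows "chiT n l n' e' (u + 1) v \<tau> = exp (2 * pi * \<i> * (n' - 1/2)) * chiT n l n' e' u v \<tau>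
    \<and> chiT n l n' e' (u + \<tau>) v \<tau> = inverse y * chiT n l (n' - 1) (e' + 1) u v \<tau>
    \<and> chiT n l n' e' u (v + 1) \<tau> = exp (2 * pi * \<i> * e') * chiT n l n' e' u v \<tau>
    \<and> chiT n l n' e' u (v + \<tau>) \<tau> = inverse z * chiT n l (n' + 1) e' u v \<tau>
    \<and> (\<forall>\<alpha>::real. chiT n l n' e' u (v + of_real \<alpha> * \<tau>) \<tau>
           = exp (- 2 * pi * \<i> * of_real \<alpha> * u) * chiT n l (n' + of_real \<alpha>) e' u v \<tau>)"
  unfolding y_def z_def by (intro conjI allI chi_u1 chi_ut chi_v1 chi_vt chi_v)

end
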